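(* Let $\mu$ be a finite positive measure on $(\Omega,\mathcal B)$ with atoms $A_1,A_2,\dots$ arranged so that $\mu(A_i)\ge\mu(A_{i+1})$. Let $X=\operatorname{sp}\{1_A-1_B:A,B\in\mathcal B,\ \mu(A)=\mu(B)\}$ and let $X_1$ be the norm closure of $X$ in $L_1(\mu)$. Suppose there is a constant $K$ such that for all $i,m\in\mathbb N$ there exists $h\in X_1$ with $\operatorname{supp}(h-1_{A_i})\subset\Omega\setminus\bigcup_{j\le m}A_j$ and $\|h\|_1\le K\mu(A_i)$. If $F\in L_\infty(\mu)$ satisfies $\int hF\,d\mu=0$ for all $h\in X_1$, and $\lim_{n\to\infty}F(A_n)$ exists, then $F$ is ($\mu$-a.e.) constant.
   Context: An atom of $\mu$ is a set $A$ with $\mu(A)>0$ such that each measurable subset of $A$ has measure $0$ or $\mu(A)$. For a measurable function $F$ and an atom $A$, $F(A)$ denotes the ($\mu$-a.e.) constant value of $F$ on $A$. $\operatorname{sp}$ denotes linear span. *)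

theory Defs
  imports "HOL-Probability.Probability"
begin

definition atom :: "'a measure \<Rightarrow> 'a set \<Rightarrow> bool" where
  "atom M A \<longleftrightarrow> A \<in> sets M \<and> measure M A > 0 \<and>
     (\<forall>B\<in>sets M. B \<subseteq> A \<longrightarrow> measure M B = 0 \<or> measure M B = measure M A)"

definition atom_value :: "'a measure \<Rightarrow> ('a \<Rightarrow> real) \<Rightarrow> 'a set \<Rightarrow> real" where
  "atom_value M F A = (THE c. AE x in M. x \<in> A \<longrightarrow> F x = c)"

definition eq_measure_span :: "'a measure \<Rightarrow> ('a \<Rightarrow> real) set" where
  "eq_measure_span M = {g. \<exists>(n::nat) c A B.
      (\<forall>k<n. A k \<in> sets M \<and> B k \<in> sets M \<and> measure M (A k) = measure M (B k)) \<and>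
      g = (\<lambda>x. \<Sum>k<n. c k * (indicator (A k) x - indicator (B k) x))}"

definition L1_closure :: "'a measure \<Rightarrow> ('a \<Rightarrow> real) set \<Rightarrow> ('a \<Rightarrow> real) set" where
  "L1_closure M S = {h. integrable M h \<and>
      (\<forall>e>0. \<exists>g\<in>S. integrable M g \<and> (\<integral>x. \<bar>h x - g x\<bar> \<partial>M) < e)}"

end

theory Submission
  imports Defs
begin

lemma span_int_zero:
  assumes fin: "finite_measure M" and g: "g \<in> eq_measure_span M"
  shows "integrable M g \<and> integral\<^sup>L M g = 0"
proof -
  interpret finite_measure M by fact
  obtain n :: nat and c A B where AB: "\<forall>k<n. A k \<in> sets M \<and> B k \<in> sets M \<and> measure M (A k) = measure M (B k)"
    and gdef: "g = (\<lambda>x. \<Sum>k<n. c k * (indicator (A k) x - indicator (B k) x))"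
    using g unfolding eq_measure_span_def by blast
  have intAB: "integrable M (\<lambda>x. indicator (A k) x - indicator (B k) x :: real)" if "k < n" for k
    using AB that by (intro Bochner_Integration.integrable_diff integrable_real_indicator)
      (auto simp: less_top[symmetric])
  have int: "integrable M (\<lambda>x. c k * (indicator (A k) x - indicator (B k) x :: real))" if "k < n" for k
    using intAB[OF that] by (rule Bochner_Integration.integrable_mult_right)
  have z: "integral\<^sup>L M (\<lambda>x. c k * (indicator (A k) x - indicator (B k) x :: real)) = 0" if k: "k < n" for k
  proof -
    have sA: "A k \<in> sets M" "B k \<in> sets M" "measure M (A k) = measure M (B k)" using AB k by auto
    have "integral\<^sup>L M (\<lambda>x. indicator (A k) x - indicator (B k) x :: real)
        = integral\<^sup>L M (indicator (A k) :: 'a \<Rightarrow> real) - integral\<^sup>L M (indicator (B k))"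
      using sA by (intro Bochner_Integration.integral_diff integrable_real_indicator) (auto simp: less_top[symmetric])
    also have "\<dots> = 0" using sA by (simp add: Int_absorb2[OF sets.sets_into_space])
    finally show ?thesis by (simp only: integral_mult_right_zero mult_zero_right)
  qed
  have "integrable M g" unfolding gdef by (rule Bochner_Integration.integrable_sum) (use int in auto)
  moreover have "integral\<^sup>L M g = 0"
    unfolding gdef
    apply (subst Bochner_Integration.integral_sum) using int apply blast
    apply (rule sum.neutral) using z by blast
  ultimately show ?thesis by blast
qed

lemma closure_int_zero:
  assumes fin: "finite_measure M" and h: "h \<in> L1_closure M (eq_measure_span M)"
  shows "integral\<^sup>L M h = 0"
proof -
  have ih: "integrable M h" using h unfolding L1_closure_def by blast
  have small: "\<bar>integral\<^sup>L M h\<bar> < e" if e: "e > 0" for e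
  proof -
    obtain g where g: "g \<in> eq_measure_span M" "integrable M g" "(\<integral>x. \<bar>h x - g x\<bar> \<partial>M) < e"
      using h e unfolding L1_closure_def by blast
    have "integral\<^sup>L M g = 0" using span_int_zero[OF fin g(1)] by blast
    then have "integral\<^sup>L M h = integral\<^sup>L M (\<lambda>x. h x - g x)" using ih g(2) by simp
    also have "\<bar>\<dots>\<bar> \<le> (\<integral>x. \<bar>h x - g x\<bar> \<partial>M)"
      using integral_norm_bound[of M "\<lambda>x. h x - g x"] by simp
    finally show ?thesis using g(3) by linarith
  qed
  show ?thesis
  proof (rule ccontr)
    assume "integral\<^sup>L M h \<noteq> 0"
    then have "\<bar>integral\<^sup>L M h\<bar> > 0" by simp
    from small[OF this] show False by simp
  qed
qed

lemma pair_in_closure: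
  assumes fin: "finite_measure M" and AB: "A \<in> sets M" "B \<in> sets M" "measure M A = measure M B"
  shows "(\<lambda>x. indicator A x - indicator B x :: real) \<in> L1_closure M (eq_measure_span M)"
proof -
  interpret finite_measure M by fact
  have mem: "(\<lambda>x. indicator A x - indicator B x :: real) \<in> eq_measure_span M"
    unfolding eq_measure_span_def
    by (rule CollectI, rule exI[of _ 1], rule exI[of _ "\<lambda>_. 1"], rule exI[of _ "\<lambda>_. A"],
        rule exI[of _ "\<lambda>_. B"]) (use AB in auto)
  have "integrable M (\<lambda>x. indicator A x - indicator B x :: real)"
    using AB by (intro Bochner_Integration.integrable_diff integrable_real_indicator) (auto simp: less_top[symmetric])
  then show ?thesis unfolding L1_closure_def using mem by (auto intro!: bexI[of _ "(\<lambda>x. indicator A x - indicator B x :: real)"])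
qed

lemma null_AE:
  assumes "finite_measure M" "N \<in> sets M" "measure M N = 0"
  shows "AE x in M. x \<notin> N"
proof -
  interpret finite_measure M by fact
  have "N \<in> null_sets M" using assms by (simp add: null_sets_def emeasure_eq_measure)
  then show ?thesis by (rule AE_not_in)
qed

lemma AE_measure0:
  assumes "N \<in> sets M" "AE x in M. x \<notin> N"
  shows "measure M N = 0"
  using assms AE_iff_null_sets[of N M] by (simp add: measure_def null_sets_def)

lemma atom_dich:
  assumes "finite_measure M" "atom M A" "P \<in> sets M" "P \<subseteq> A"
  shows "measure M P = 0 \<or> measure M (A - P) = 0"
proof -
  interpret finite_measure M by fact
  have "A \<in> sets M" using assms(2) by (simp add: atom_def)
  moreover have "measure M P = 0 \<or> measure M P = measure M A" using assms by (auto simp: atom_def)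
  ultimately show ?thesis using finite_measure_Diff[of A P] assms by auto
qed

lemma aux_pos_contra:
  fixes G :: "'a \<Rightarrow> real"
  assumes "integrable M G" "AE x in M. 0 \<le> G x" "integral\<^sup>L M G = 0"
    "A \<in> sets M" "measure M A > 0" "AE x in M. x \<in> A \<longrightarrow> G x > 0"
  shows False
proof -
  have "AE x in M. G x = 0" using integral_nonneg_eq_0_iff_AE[OF assms(1,2)] assms(3) by simp
  with assms(6) have "AE x in M. x \<notin> A" by eventually_elim auto
  then have "measure M A = 0" using AE_measure0 assms(4) by blast
  with assms(5) show False by simp
qed

lemma atom_const:
  fixes F :: "'a \<Rightarrow> real"
  assumes fin: "finite_measure M" and at: "atom M A" and Fm: "F \<in> borel_measurable M"
    and Fb: "AE x in M. \<bar>F x\<bar> \<le> C"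
  shows "AE x in M. x \<in> A \<longrightarrow> F x = atom_value M F A"
proof -
  interpret finite_measure M by fact
  have Asets: "A \<in> sets M" and Apos: "measure M A > 0" using at by (auto simp: atom_def)
  have Fi: "integrable M F" using Fb Fm by (intro integrable_const_bound[of F C]) auto
  have FAi: "integrable M (\<lambda>x. indicator A x * F x)"
    using integrable_real_mult_indicator[OF Asets Fi] by (simp add: mult.commute)
  define c where "c = integral\<^sup>L M (\<lambda>x. indicator A x * F x) / measure M A"
  have intA: "integral\<^sup>L M (\<lambda>x. indicator A x * F x) = c * measure M A"
    using Apos unfolding c_def by simp
  have AiA: "integrable M (indicator A :: 'a \<Rightarrow> real)" using Asets by (auto simp: less_top[symmetric])
  have intAA: "integral\<^sup>L M (indicator A :: 'a \<Rightarrow> real) = measure M A"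
    using Asets by (simp add: Int_absorb2 sets.sets_into_space)
  define G1 where "G1 = (\<lambda>x. indicator A x * F x - c * indicator A x :: real)"
  have G1i: "integrable M G1" unfolding G1_def using FAi AiA by auto
  have G1z: "integral\<^sup>L M G1 = 0" unfolding G1_def using FAi AiA intA intAA by simp
  define G2 where "G2 = (\<lambda>x. c * indicator A x - indicator A x * F x :: real)"
  have G2i: "integrable M G2" unfolding G2_def using FAi AiA by auto
  have G2z: "integral\<^sup>L M G2 = 0" unfolding G2_def using FAi AiA intA intAA by simp
  define P where "P = {x \<in> space M. F x > c} \<inter> A"
  define Q where "Q = {x \<in> space M. F x < c} \<inter> A"
  have Ps: "P \<in> sets M" "P \<subseteq> A" unfolding P_def using Fm Asets by auto
  have Qs: "Q \<in> sets M" "Q \<subseteq> A" unfolding Q_def using Fm Asets by auto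
  have P0: "measure M P = 0"
  proof (rule ccontr)
    assume "measure M P \<noteq> 0"
    then have "measure M (A - P) = 0" using atom_dich[OF fin at Ps] by auto
    then have "AE x in M. x \<notin> A - P" using null_AE[OF fin, of "A - P"] Ps Asets by blast
    then have "AE x in M. x \<in> A \<longrightarrow> G1 x > 0"
      by eventually_elim (auto simp: P_def G1_def dest: sets.sets_into_space[OF Asets, THEN subsetD])
    moreover have "AE x in M. 0 \<le> G1 x" using \<open>AE x in M. x \<notin> A - P\<close>
      by eventually_elim (auto simp: P_def G1_def indicator_def dest: sets.sets_into_space[OF Asets, THEN subsetD])
    ultimately show False using aux_pos_contra[OF G1i _ G1z Asets Apos] by blast
  qed
  have Q0: "measure M Q = 0"
  proof (rule ccontr)
    assume "measure M Q \<noteq> 0"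
    then have "measure M (A - Q) = 0" using atom_dich[OF fin at Qs] by auto
    then have "AE x in M. x \<notin> A - Q" using null_AE[OF fin, of "A - Q"] Qs Asets by blast
    then have "AE x in M. x \<in> A \<longrightarrow> G2 x > 0"
      by eventually_elim (auto simp: Q_def G2_def dest: sets.sets_into_space[OF Asets, THEN subsetD])
    moreover have "AE x in M. 0 \<le> G2 x" using \<open>AE x in M. x \<notin> A - Q\<close>
      by eventually_elim (auto simp: Q_def G2_def indicator_def dest: sets.sets_into_space[OF Asets, THEN subsetD])
    ultimately show False using aux_pos_contra[OF G2i _ G2z Asets Apos] by blast
  qed
  have ex: "AE x in M. x \<in> A \<longrightarrow> F x = c"
    using null_AE[OF fin Ps(1) P0] null_AE[OF fin Qs(1) Q0] AE_space
    by eventually_elim (auto simp: P_def Q_def)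
  have uniq: "d = c" if "AE x in M. x \<in> A \<longrightarrow> F x = d" for d
  proof (rule ccontr)
    assume "d \<noteq> c"
    from that ex have "AE x in M. x \<notin> A" by eventually_elim (use \<open>d \<noteq> c\<close> in auto)
    then show False using AE_measure0[OF Asets] Apos by simp
  qed
  have "atom_value M F A = c" unfolding atom_value_def
    using ex uniq by (rule the_equality)
  then show ?thesis using ex by simp
qed

lemma small_subset_pow:
  assumes fin: "finite_measure M" and noatom: "\<forall>B\<in>sets M. B \<subseteq> N \<longrightarrow> \<not> atom M B"
    and S: "S \<in> sets M" "S \<subseteq> N" "measure M S > 0"
  shows "\<exists>C\<in>sets M. C \<subseteq> S \<and> 0 < measure M C \<and> measure M C \<le> measure M S / 2^k"
proof (induction k)
  case 0
  then show ?case using S by auto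
next
  case (Suc k)
  interpret finite_measure M by fact
  obtain C where C: "C \<in> sets M" "C \<subseteq> S" "0 < measure M C" "measure M C \<le> measure M S / 2^k"
    using Suc by blast
  have "\<not> atom M C" using noatom C S by blast
  then obtain D where D: "D \<in> sets M" "D \<subseteq> C" "measure M D \<noteq> 0" "measure M D \<noteq> measure M C"
    using C unfolding atom_def by blast
  have le: "measure M D \<le> measure M C" using finite_measure_mono[OF D(2) C(1)] .
  have pos: "measure M D > 0" using D(3) measure_nonneg[of M D] by linarith
  have diff: "measure M (C - D) = measure M C - measure M D" using finite_measure_Diff[OF C(1) D(1) D(2)] .
  show ?case
  proof (cases "measure M D \<le> measure M C / 2")
    case True
    have "measure M D \<le> measure M C / 2" using True .
    also have "\<dots> \<le> (measure M S / 2^k) / 2" using C(4) by (rule divide_right_mono) simp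
    also have "\<dots> = measure M S / 2^Suc k" by (simp add: field_simps)
    finally have "measure M D \<le> measure M S / 2^Suc k" .
    moreover have "D \<subseteq> S" using D C by auto
    ultimately show ?thesis using D(1) pos by (intro bexI[of _ D]) simp_all
  next
    case False
    have "measure M (C - D) \<le> measure M C / 2" using False diff by simp
    also have "\<dots> \<le> (measure M S / 2^k) / 2" using C(4) by (rule divide_right_mono) simp
    also have "\<dots> = measure M S / 2^Suc k" by (simp add: field_simps)
    finally have "measure M (C - D) \<le> measure M S / 2^Suc k" .
    moreover have "measure M (C - D) > 0" using diff D(4) le by simp
    moreover have "C - D \<in> sets M" "C - D \<subseteq> S" using D C by auto
    ultimately show ?thesis by (intro bexI[of _ "C - D"]) simp_all
  qed
qed

lemma small_subset:
  assumes fin: "finite_measure M" and noatom: "\<forall>B\<in>sets M. B \<subseteq> N \<longrightarrow> \<not> atom M B"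
    and S: "S \<in> sets M" "S \<subseteq> N" "measure M S > 0" and e: "e > 0"
  shows "\<exists>C\<in>sets M. C \<subseteq> S \<and> 0 < measure M C \<and> measure M C < e"
proof -
  obtain k where k: "(1/2::real)^k < e / measure M S"
    using real_arch_pow_inv[of "e / measure M S" "1/2"] e S by auto
  obtain C where C: "C\<in>sets M" "C \<subseteq> S" "0 < measure M C" "measure M C \<le> measure M S / 2^k"
    using small_subset_pow[OF assms(1-5)] by blast
  have "measure M S / 2^k = measure M S * (1/2)^k" by (simp add: power_divide)
  also have "\<dots> < measure M S * (e / measure M S)" using k S by (intro mult_strict_left_mono) auto
  also have "\<dots> = e" using S by simp
  finally have "measure M S / 2^k < e" .
  then have "measure M C < e" using C(4) by linarith
  then show ?thesis using C(1-3) by blast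
qed

lemma sierpinski:
  assumes fin: "finite_measure M" and noatom: "\<forall>B\<in>sets M. B \<subseteq> N \<longrightarrow> \<not> atom M B"
    and S: "S \<in> sets M" "S \<subseteq> N" and t: "0 \<le> t" "t \<le> measure M S"
  shows "\<exists>C\<in>sets M. C \<subseteq> S \<and> measure M C = t"
proof -
  interpret finite_measure M by fact
  define V where "V B = {measure M D | D. D \<in> sets M \<and> D \<subseteq> S - B \<and> measure M B + measure M D \<le> t}" for B
  define good where "good B C \<longleftrightarrow> C \<in> sets M \<and> C \<subseteq> S - B \<and> measure M B + measure M C \<le> t
      \<and> Sup (V B) \<le> 2 * measure M C" for B C
  have bdd: "bdd_above (V B)" if "B \<in> sets M" for B
  proof (rule bdd_aboveI)
    fix x assume "x \<in> V B"
    then obtain D where "x = measure M D" "measure M B + measure M D \<le> t" unfolding V_def by blast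
    then show "x \<le> t" using measure_nonneg[of M B] by linarith
  qed
  have ne: "0 \<in> V B" if "measure M B \<le> t" for B
    unfolding V_def using that by (intro CollectI exI[of _ "{}"]) simp
  have ex: "\<exists>C. good B C" if B: "B \<in> sets M" "measure M B \<le> t" for B
  proof (cases "Sup (V B) \<le> 0")
    case True
    then have "good B {}" using B unfolding good_def by simp
    then show ?thesis by blast
  next
    case False
    then have "Sup (V B) / 2 < Sup (V B)" by simp
    have nem: "V B \<noteq> {}" using ne[OF B(2)] by auto
    have "\<exists>y\<in>V B. Sup (V B) / 2 < y"
      using less_cSup_iff[OF nem bdd[OF B(1)], of "Sup (V B) / 2"] \<open>Sup (V B) / 2 < Sup (V B)\<close> by simp
    then obtain y where y: "y \<in> V B" "Sup (V B) / 2 < y" by blast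
    then obtain D where "D \<in> sets M" "D \<subseteq> S - B" "measure M B + measure M D \<le> t" "y = measure M D"
      unfolding V_def by blast
    then have "good B D" using y unfolding good_def by simp
    then show ?thesis by blast
  qed
  define step where "step B = (SOME C. good B C)" for B
  define Bs where "Bs n = ((\<lambda>B. B \<union> step B) ^^ n) {}" for n
  have Bs0: "Bs 0 = {}" and BsS: "Bs (Suc n) = Bs n \<union> step (Bs n)" for n
    unfolding Bs_def by auto
  have inv: "Bs n \<in> sets M \<and> Bs n \<subseteq> S \<and> measure M (Bs n) \<le> t \<and> good (Bs n) (step (Bs n))" for n
  proof (induction n)
    case 0
    have "good {} (step {})" unfolding step_def using ex[of "{}"] t by (auto intro: someI_ex)
    then show ?case using Bs0 t by auto
  next
    case (Suc n)
    then have g: "step (Bs n) \<in> sets M" "step (Bs n) \<subseteq> S - Bs n"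
      "measure M (Bs n) + measure M (step (Bs n)) \<le> t" unfolding good_def by auto
    have m: "measure M (Bs (Suc n)) = measure M (Bs n) + measure M (step (Bs n))"
      unfolding BsS using g Suc by (intro finite_measure_Union) auto
    have 1: "Bs (Suc n) \<in> sets M" "Bs (Suc n) \<subseteq> S" "measure M (Bs (Suc n)) \<le> t"
      using Suc g m unfolding BsS by auto
    have "good (Bs (Suc n)) (step (Bs (Suc n)))"
      unfolding step_def using ex[OF 1(1) 1(3)] by (auto intro: someI_ex)
    then show ?case using 1 by blast
  qed
  have m: "measure M (Bs (Suc n)) = measure M (Bs n) + measure M (step (Bs n))" for n
    using inv[of n] unfolding BsS good_def by (intro finite_measure_Union) auto
  have inc: "incseq Bs" by (rule incseq_SucI) (simp add: BsS)
  define B where "B = (\<Union>n. Bs n)"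
  have Bsets: "B \<in> sets M" "B \<subseteq> S" unfolding B_def using inv by auto
  have lim: "(\<lambda>n. measure M (Bs n)) \<longlonglongrightarrow> measure M B"
    unfolding B_def using inv inc by (intro finite_Lim_measure_incseq) auto
  have Ble: "measure M B \<le> t"
    using lim inv by (intro LIMSEQ_le_const2[OF lim]) auto
  have Bsle: "measure M (Bs n) \<le> measure M B" for n
    using Bsets unfolding B_def by (intro finite_measure_mono) auto
  have steplim: "(\<lambda>n. measure M (step (Bs n))) \<longlonglongrightarrow> 0"
  proof -
    have "(\<lambda>n. measure M (Bs (Suc n)) - measure M (Bs n)) \<longlonglongrightarrow> measure M B - measure M B"
      by (intro tendsto_diff lim LIMSEQ_Suc[OF lim])
    then show ?thesis using m by simp
  qed
  have "measure M B = t"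
  proof (rule ccontr)
    assume "measure M B \<noteq> t"
    then have lt: "measure M B < t" using Ble by simp
    have SB: "S - B \<in> sets M" "S - B \<subseteq> N" using Bsets S by auto
    have "measure M (S - B) = measure M S - measure M B"
      using Bsets S by (intro finite_measure_Diff) auto
    then have "measure M (S - B) > 0" using lt t by simp
    then obtain D where D: "D \<in> sets M" "D \<subseteq> S - B" "0 < measure M D" "measure M D < t - measure M B"
      using small_subset[OF fin noatom SB] lt by (metis diff_gt_0_iff_gt)
    have dle: "measure M D \<le> 2 * measure M (step (Bs n))" for n
    proof -
      have "measure M D \<in> V (Bs n)" unfolding V_def using D Bsle[of n]
        by (auto simp: B_def intro!: exI[of _ D])
      then have "measure M D \<le> Sup (V (Bs n))" using bdd[of "Bs n"] inv[of n] by (intro cSup_upper) auto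
      also have "\<dots> \<le> 2 * measure M (step (Bs n))" using inv[of n] unfolding good_def by blast
      finally show ?thesis .
    qed
    have "eventually (\<lambda>n. measure M (step (Bs n)) < measure M D / 2) sequentially"
      using order_tendstoD(2)[OF steplim, of "measure M D / 2"] D(3) by fastforce
    then obtain n where "measure M (step (Bs n)) < measure M D / 2"
      by (meson eventually_sequentially order_refl)
    with dle[of n] show False by linarith
  qed
  then show ?thesis using Bsets by blast
qed

lemma measure_tendsto_zero:
  assumes fin: "finite_measure M" and Asets: "\<And>i. A i \<in> sets M"
    and distinct: "\<And>i j. i \<noteq> j \<Longrightarrow> measure M (A i \<inter> A j) = 0"
  shows "(\<lambda>n. measure M (A n)) \<longlonglongrightarrow> 0"
proof -
  interpret finite_measure M by fact
  define D where "D n = A n - (\<Union>j<n. A j)" for n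
  have Dsets: "D n \<in> sets M" for n unfolding D_def using Asets by auto
  have disj: "disjoint_family D"
    unfolding disjoint_family_on_def D_def
    by (metis Diff_disjoint Diff_iff UNIV_I disjoint_iff lessThan_iff linorder_neqE_nat UN_I)
  have eq: "measure M (D n) = measure M (A n)" for n
  proof -
    have U: "(\<Union>j<n. A j) \<in> sets M" using Asets by auto
    have "measure M (A n \<inter> (\<Union>j<n. A j)) \<le> (\<Sum>j<n. measure M (A n \<inter> A j))"
      unfolding Int_UN_distrib using Asets by (intro finite_measure_subadditive_finite) auto
    also have "\<dots> = 0" using distinct by (intro sum.neutral) auto
    finally have z: "measure M (A n \<inter> (\<Union>j<n. A j)) = 0" using measure_nonneg[of M] by (simp add: order_antisym)
    have "A n = D n \<union> (A n \<inter> (\<Union>j<n. A j))" "D n \<inter> (A n \<inter> (\<Union>j<n. A j)) = {}"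
      unfolding D_def by blast+
    then have "measure M (A n) = measure M (D n) + measure M (A n \<inter> (\<Union>j<n. A j))"
      using Dsets U Asets by (metis finite_measure_Union sets.Int)
    then show ?thesis using z by simp
  qed
  have "(\<lambda>n. measure M (D n)) sums measure M (\<Union>n. D n)"
    using Dsets disj by (intro finite_measure_UNION) auto
  then have "summable (\<lambda>n. measure M (A n))" using eq by (simp add: sums_iff)
  then show ?thesis by (rule summable_LIMSEQ_zero)
qed

lemma le_of_inverse_Suc:
  fixes a c :: real
  assumes "\<And>k::nat. a \<le> c + 1 / real (Suc k)"
  shows "a \<le> c"
proof (rule ccontr)
  assume "\<not> a \<le> c"
  then have "a - c > 0" by simp
  then obtain k where "inverse (real (Suc k)) < a - c" using reals_Archimedean by blast
  with assms[of k] show False by (simp add: inverse_eq_divide)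
qed

theorem theorem2p2:
  fixes M :: "'a measure" and A :: "nat \<Rightarrow> 'a set" and F :: "'a \<Rightarrow> real"
  assumes fin: "finite_measure M"
    and atoms: "\<And>i. atom M (A i)"
    and distinct: "\<And>i j. i \<noteq> j \<Longrightarrow> measure M (A i \<inter> A j) = 0"
    and all_atoms: "\<And>B. atom M B \<Longrightarrow>
        \<exists>i. measure M (B - A i) = 0 \<and> measure M (A i - B) = 0"
    and decr: "\<And>i. measure M (A (Suc i)) \<le> measure M (A i)"
    and K: "\<exists>K::real. \<forall>i m. \<exists>h\<in>L1_closure M (eq_measure_span M).
        (AE x in M. x \<in> (\<Union>j\<le>m. A j) \<longrightarrow> h x = indicator (A i) x) \<and>
        (\<integral>x. \<bar>h x\<bar> \<partial>M) \<le> K * measure M (A i)"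
    and F_meas: "F \<in> borel_measurable M"
    and F_bdd: "\<exists>C. AE x in M. \<bar>F x\<bar> \<le> C"
    and F_annih: "\<And>h. h \<in> L1_closure M (eq_measure_span M) \<Longrightarrow> (\<integral>x. h x * F x \<partial>M) = 0"
    and F_lim: "convergent (\<lambda>n. atom_value M F (A n))"
  shows "\<exists>c. AE x in M. F x = c"
proof -
  interpret finite_measure M by (rule fin)
  obtain C where Cb: "AE x in M. \<bar>F x\<bar> \<le> C" using F_bdd by blast
  define v where "v j = atom_value M F (A j)" for j
  have Asets[measurable]: "A i \<in> sets M" and Apos: "measure M (A i) > 0" for i
    using atoms[of i] by (auto simp: atom_def)
  note F_meas[measurable]
  have vae: "AE x in M. \<forall>j. x \<in> A j \<longrightarrow> F x = v j"
    unfolding AE_all_countable v_def using atom_const[OF fin atoms F_meas Cb] by blast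
  obtain c where vlim: "v \<longlonglongrightarrow> c" using F_lim unfolding convergent_def v_def by blast
  have Fi: "integrable M F" using Cb F_meas by (intro integrable_const_bound[of F C]) auto
  have Alim: "(\<lambda>n. measure M (A n)) \<longlonglongrightarrow> 0"
    by (rule measure_tendsto_zero[OF fin Asets distinct])
  define N where "N = space M - (\<Union>i. A i)"
  have Nsets: "N \<in> sets M" unfolding N_def using Asets by auto
  have noatom: "\<forall>B\<in>sets M. B \<subseteq> N \<longrightarrow> \<not> atom M B"
  proof (intro ballI impI notI)
    fix B assume B: "B \<in> sets M" "B \<subseteq> N" "atom M B"
    then obtain i where i: "measure M (B - A i) = 0" using all_atoms by blast
    have "B - A i = B" using B(2) unfolding N_def by blast
    then have "measure M B = 0" using i by simp
    then show False using B(3) by (simp add: atom_def)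
  qed
  have indF: "integrable M (\<lambda>x. indicator S x * F x)" if "S \<in> sets M" for S
    using integrable_real_mult_indicator[OF that Fi] by (simp add: mult.commute)
  have eqint: "(\<integral>x. indicator S x * F x \<partial>M) = (\<integral>x. indicator T x * F x \<partial>M)"
    if ST: "S \<in> sets M" "T \<in> sets M" "measure M S = measure M T" for S T
  proof -
    have "0 = (\<integral>x. (indicator S x - indicator T x) * F x \<partial>M)"
      using F_annih[OF pair_in_closure[OF fin ST]] by simp
    also have "\<dots> = (\<integral>x. indicator S x * F x - indicator T x * F x \<partial>M)"
      by (simp add: left_diff_distrib)
    also have "\<dots> = (\<integral>x. indicator S x * F x \<partial>M) - (\<integral>x. indicator T x * F x \<partial>M)"
      using indF[OF ST(1)] indF[OF ST(2)] by (rule Bochner_Integration.integral_diff)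
    finally show ?thesis by simp
  qed
  have intAn: "(\<integral>x. indicator (A n) x * F x \<partial>M) = v n * measure M (A n)" for n
  proof -
    have "(\<integral>x. indicator (A n) x * F x \<partial>M) = (\<integral>x. v n * indicator (A n) x \<partial>M)"
      apply (rule integral_cong_AE)
        apply measurable
      using vae by eventually_elim (auto simp: indicator_def)
    also have "\<dots> = v n * measure M (A n)"
      using Asets[of n] by (simp add: Int_absorb2[OF sets.sets_into_space])
    finally show ?thesis .
  qed
  have Pnull: "measure M ({x \<in> space M. s * (F x - c) > d} \<inter> N) = 0"
    if s: "s = 1 \<or> s = -1" and d: "d > 0" for s d
  proof (rule ccontr)
    define P where "P = {x \<in> space M. s * (F x - c) > d} \<inter> N"
    assume "measure M ({x \<in> space M. s * (F x - c) > d} \<inter> N) \<noteq> 0"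
    then have Ppos: "measure M P > 0" unfolding P_def using measure_nonneg[of M] by (simp add: order_less_le)
    have Psets: "P \<in> sets M" "P \<subseteq> N" unfolding P_def using F_meas Nsets by auto
    have ev1: "eventually (\<lambda>n. measure M (A n) < measure M P) sequentially"
      using order_tendstoD(2)[OF Alim Ppos] .
    have ev2: "eventually (\<lambda>n. dist (v n) c < d) sequentially"
      using tendstoD[OF vlim d] .
    obtain N0 where N0: "\<forall>n\<ge>N0. measure M (A n) < measure M P \<and> dist (v n) c < d"
      using eventually_conj[OF ev1 ev2] unfolding eventually_sequentially by blast
    then have "measure M (A N0) < measure M P \<and> dist (v N0) c < d" by simp
    then obtain n where n1: "measure M (A n) < measure M P" and n2: "dist (v n) c < d" by blast
    obtain D where D: "D \<in> sets M" "D \<subseteq> P" "measure M D = measure M (A n)"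
      using sierpinski[OF fin noatom Psets measure_nonneg[of M "A n"]] n1 by auto
    have "(\<integral>x. indicator D x * (s * c + d) \<partial>M) \<le> (\<integral>x. indicator D x * (s * F x) \<partial>M)"
    proof (rule integral_mono)
      show "integrable M (\<lambda>x. indicator D x * (s * c + d))"
        using D(1) by (simp add: less_top[symmetric])
      show "integrable M (\<lambda>x. indicator D x * (s * F x))"
        using indF[OF D(1)] by (simp add: mult.left_commute)
      fix x assume "x \<in> space M"
      show "indicator D x * (s * c + d) \<le> indicator D x * (s * F x)"
        using D(2) unfolding P_def by (auto simp: indicator_def algebra_simps)
    qed
    also have "\<dots> = s * (\<integral>x. indicator D x * F x \<partial>M)"
      by (simp add: mult.left_commute)
    also have "\<dots> = s * (v n * measure M (A n))"
      using eqint[OF D(1) Asets D(3)] intAn by simp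
    finally have ineq: "(s * c + d) * measure M (A n) \<le> s * v n * measure M (A n)"
      using D(1,3) by (simp add: Int_absorb2[OF sets.sets_into_space] mult.commute)
    have "s * v n < s * c + d" using n2 s by (auto simp: dist_real_def abs_less_iff)
    then have "s * v n * measure M (A n) < (s * c + d) * measure M (A n)"
      using Apos[of n] by (intro mult_strict_right_mono) auto
    with ineq show False by linarith
  qed
  have Nae: "AE x in M. x \<in> N \<longrightarrow> F x = c"
  proof -
    have "AE x in M. \<forall>k. x \<notin> {x \<in> space M. s * (F x - c) > 1 / real (Suc k)} \<inter> N"
      if "s = 1 \<or> s = -1" for s
      unfolding AE_all_countable
    proof
      fix k
      show "AE x in M. x \<notin> {x \<in> space M. s * (F x - c) > 1 / real (Suc k)} \<inter> N"
        using null_AE[OF fin _ Pnull[OF that]] F_meas Nsets by auto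
    qed
    from this[of 1, OF disjI1[OF refl]] this[of "-1", OF disjI2[OF refl]] AE_space
    show ?thesis
    proof eventually_elim
      case (elim x)
      show ?case
      proof
        assume xN: "x \<in> N"
        have "F x - c \<le> 0" using elim(1) xN elim(3)
          by (intro le_of_inverse_Suc[of "F x - c" 0]) (auto simp: not_less)
        moreover have "c - F x \<le> 0" using elim(2) xN elim(3)
          by (intro le_of_inverse_Suc[of "c - F x" 0]) (auto simp: not_less)
        ultimately show "F x = c" by simp
      qed
    qed
  qed
  obtain KK where KK: "\<forall>i m. \<exists>h\<in>L1_closure M (eq_measure_span M).
        (AE x in M. x \<in> (\<Union>j\<le>m. A j) \<longrightarrow> h x = indicator (A i) x) \<and>
        (\<integral>x. \<bar>h x\<bar> \<partial>M) \<le> KK * measure M (A i)" using K by blast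
  have vc: "v i = c" for i
  proof -
    define B where "B = \<bar>KK\<bar> * measure M (A i) + 1"
    have Bpos: "B > 0" unfolding B_def by (intro add_nonneg_pos mult_nonneg_nonneg) auto
    have main: "\<bar>v i - c\<bar> * measure M (A i) \<le> e * B" if e: "e > 0" for e
    proof -
      obtain m0 where m0: "\<forall>n\<ge>m0. norm (v n - c) < e" using vlim e unfolding LIMSEQ_iff by blast
      define m where "m = max i m0"
      obtain h where hX: "h \<in> L1_closure M (eq_measure_span M)"
        and hU: "AE x in M. x \<in> (\<Union>j\<le>m. A j) \<longrightarrow> h x = indicator (A i) x"
        and hK: "(\<integral>x. \<bar>h x\<bar> \<partial>M) \<le> KK * measure M (A i)"
        using KK by blast
      have hi: "integrable M h" using hX unfolding L1_closure_def by blast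
      have hm: "h \<in> borel_measurable M" using hi by (rule borel_measurable_integrable)
      have h0: "integral\<^sup>L M h = 0" using closure_int_zero[OF fin hX] .
      have hF0: "(\<integral>x. h x * F x \<partial>M) = 0" using F_annih[OF hX] .
      have hFi: "integrable M (\<lambda>x. h x * F x)"
      proof (rule Bochner_Integration.integrable_bound[where f="\<lambda>x. C * h x"])
        show "integrable M (\<lambda>x. C * h x)" using hi by simp
        show "(\<lambda>x. h x * F x) \<in> borel_measurable M" using hm F_meas by measurable
        show "AE x in M. norm (h x * F x) \<le> norm (C * h x)"
          using Cb by eventually_elim (auto simp: abs_mult mult.commute intro: mult_right_mono order_trans[OF _ abs_ge_self])
      qed
      define U where "U = (\<Union>j\<le>m. A j)"
      define T where "T = space M - U"
      have Usets: "U \<in> sets M" unfolding U_def using Asets by auto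
      have Tsets: "T \<in> sets M" unfolding T_def using Usets by auto
      have AiU: "A i \<subseteq> U" unfolding U_def m_def by (rule subsetI, rule UN_I[of i]) auto
      define R where "R x = h x * (F x - c) * indicator T x" for x
      have hFci: "integrable M (\<lambda>x. h x * (F x - c))"
        using hFi hi by (simp add: right_diff_distrib)
      have Ri: "integrable M R"
        unfolding R_def using integrable_real_mult_indicator[OF Tsets hFci] .
      note [measurable] = hm borel_measurable_integrable[OF Ri]
      have decomp: "AE x in M. h x * (F x - c) = (v i - c) * indicator (A i) x + R x"
        using hU vae AE_space
      proof eventually_elim
        case (elim x)
        show ?case
        proof (cases "x \<in> U")
          case True
          then have "x \<notin> T" unfolding T_def by simp
          moreover have "h x = indicator (A i) x" using elim(1) True unfolding U_def by simp
          ultimately show ?thesis using elim(2) by (auto simp: R_def indicator_def)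
        next
          case False
          then have "x \<in> T" "x \<notin> A i" unfolding T_def using elim(3) AiU by auto
          then show ?thesis by (simp add: R_def)
        qed
      qed
      have "0 = (\<integral>x. h x * (F x - c) \<partial>M)"
        using hF0 h0 hFi hi by (simp add: right_diff_distrib)
      also have "\<dots> = (\<integral>x. (v i - c) * indicator (A i) x + R x \<partial>M)"
        apply (rule integral_cong_AE)
          apply measurable
        using decomp by simp
      also have "\<dots> = (v i - c) * measure M (A i) + integral\<^sup>L M R"
        using Ri Asets[of i] by (simp add: less_top[symmetric] Int_absorb2[OF sets.sets_into_space])
      finally have eqR: "(v i - c) * measure M (A i) = - integral\<^sup>L M R" by linarith
      have Rb: "AE x in M. \<bar>R x\<bar> \<le> e * \<bar>h x\<bar>"
        using vae Nae AE_space
      proof eventually_elim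
        case (elim x)
        show ?case
        proof (cases "x \<in> T")
          case False
          then show ?thesis using e by (simp add: R_def)
        next
          case True
          have "\<bar>F x - c\<bar> \<le> e"
          proof (cases "x \<in> N")
            case True
            then show ?thesis using elim(2) e by simp
          next
            case False
            then obtain j where j: "x \<in> A j" using elim(3) unfolding N_def by blast
            have "j > m" using True j unfolding T_def U_def by (meson atMost_iff UN_I Diff_iff not_le)
            then have "\<bar>v j - c\<bar> < e" using m0 unfolding m_def by auto
            then show ?thesis using elim(1) j by simp
          qed
          then have "\<bar>h x\<bar> * \<bar>F x - c\<bar> \<le> \<bar>h x\<bar> * e" by (intro mult_left_mono) auto
          then show ?thesis using True by (simp add: R_def abs_mult mult.commute)
        qed
      qed
      have "\<bar>integral\<^sup>L M R\<bar> \<le> (\<integral>x. \<bar>R x\<bar> \<partial>M)"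
        using integral_norm_bound[of M R] by simp
      also have "\<dots> \<le> (\<integral>x. e * \<bar>h x\<bar> \<partial>M)"
        using Ri hi Rb by (intro integral_mono_AE) auto
      also have "\<dots> = e * (\<integral>x. \<bar>h x\<bar> \<partial>M)" by simp
      also have "\<dots> \<le> e * (KK * measure M (A i))" using hK e by (intro mult_left_mono) auto
      also have "\<dots> \<le> e * B" unfolding B_def using e Apos[of i]
        by (intro mult_left_mono) (auto intro: order_trans[OF mult_right_mono[OF abs_ge_self]])
      finally have "\<bar>integral\<^sup>L M R\<bar> \<le> e * B" .
      moreover have "\<bar>v i - c\<bar> * measure M (A i) = \<bar>integral\<^sup>L M R\<bar>"
        using eqR Apos[of i] by (metis abs_minus_cancel abs_mult abs_of_pos)
      ultimately show ?thesis by simp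
    qed
    have "\<bar>v i - c\<bar> * measure M (A i) \<le> 0"
    proof (rule field_le_epsilon)
      fix e :: real assume "e > 0"
      then have "e / B > 0" using Bpos by simp
      from main[OF this] show "\<bar>v i - c\<bar> * measure M (A i) \<le> 0 + e" using Bpos by simp
    qed
    then have "\<bar>v i - c\<bar> \<le> 0" using Apos[of i] by (simp add: mult_le_0_iff)
    then show ?thesis by simp
  qed
  have "AE x in M. F x = c"
    using vae Nae AE_space
  proof eventually_elim
    case (elim x)
    show ?case
    proof (cases "x \<in> N")
      case True then show ?thesis using elim(2) by simp
    next
      case False
      then obtain j where "x \<in> A j" using elim(3) unfolding N_def by blast
      then have "F x = v j" using elim(1) by blast
      then show ?thesis using vc by simp
    qed
  qed
  then show ?thesis by blast
qed

end
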